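(* Let $L$ be a totally ordered normal incline and let $A=(a_{ij})$ be a $3\times 3$ completely positive matrix over $L$. Then at least two of the following inequalities hold: $$a_{11}\otimes a_{23}\ge a_{12}\otimes a_{13},\qquad a_{22}\otimes a_{13}\ge a_{12}\otimes a_{23},\qquad a_{33}\otimes a_{12}\ge a_{13}\otimes a_{23}.$$
   Context: An incline is a nonempty set $L$ with binary operations $\oplus,\otimes$ such that $(L,\oplus)$ is a semilattice ($\oplus$ associative, commutative, idempotent), $(L,\otimes)$ is a semigroup, $x\otimes(y\oplus z)=(x\otimes y)\oplus(x\otimes z)$ and $x\oplus(x\otimes y)=x$ for all $x,y,z$. The order is $x\le y\iff x\oplus y=y$; $L$ is totally ordered if this order is total, and commutative if $\otimes$ is commutative. An r-ideal is a nonempty $J\subseteq L$ closed under $\oplus$ and under multiplication by arbitrary elements of $L$; a lattice ideal is a nonempty $J\subseteq L$ closed under $\oplus$ and downward closed. A commutative incline $L$ is normal if it has an additive identity $\mathbf{0}$ and a multiplicative identity $\mathbf{1}$ and: every singly generated r-ideal is a lattice ideal (LI-property); for each $x$ there is a unique $c$ with $c\otimes c=x$; $x\otimes y\le(x\otimes x)\oplus(y\otimes y)$ for all $x,y$. Matrix product: $(BC)_{ij}=\bigoplus_k b_{ik}\otimes c_{kj}$; $B^T$ is the transpose. $A$ is completely positive if $A=BB^T$ for some $3\times k$ matrix $B$ over $L$ all of whose entries are of the form $c\otimes c$. *)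

theory Defs
  imports Main
begin

text \<open>An incline on the carrier type 'a, with operations p (addition, oplus) and m (multiplication, otimes).\<close>
definition incline :: "('a \<Rightarrow> 'a \<Rightarrow> 'a) \<Rightarrow> ('a \<Rightarrow> 'a \<Rightarrow> 'a) \<Rightarrow> bool" where
  "incline p m \<longleftrightarrow>
     (\<forall>x y z. p (p x y) z = p x (p y z)) \<and> (\<forall>x y. p x y = p y x) \<and> (\<forall>x. p x x = x) \<and>
     (\<forall>x y z. m (m x y) z = m x (m y z)) \<and>
     (\<forall>x y z. m x (p y z) = p (m x y) (m x z)) \<and>
     (\<forall>x y. p x (m x y) = x)"

definition inc_le :: "('a \<Rightarrow> 'a \<Rightarrow> 'a) \<Rightarrow> 'a \<Rightarrow> 'a \<Rightarrow> bool" where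
  "inc_le p x y \<longleftrightarrow> p x y = y"

definition totally_ordered :: "('a \<Rightarrow> 'a \<Rightarrow> 'a) \<Rightarrow> bool" where
  "totally_ordered p \<longleftrightarrow> (\<forall>x y. inc_le p x y \<or> inc_le p y x)"

definition commutative_incline :: "('a \<Rightarrow> 'a \<Rightarrow> 'a) \<Rightarrow> ('a \<Rightarrow> 'a \<Rightarrow> 'a) \<Rightarrow> bool" where
  "commutative_incline p m \<longleftrightarrow> incline p m \<and> (\<forall>x y. m x y = m y x)"

definition r_ideal :: "('a \<Rightarrow> 'a \<Rightarrow> 'a) \<Rightarrow> ('a \<Rightarrow> 'a \<Rightarrow> 'a) \<Rightarrow> 'a set \<Rightarrow> bool" where
  "r_ideal p m J \<longleftrightarrow> J \<noteq> {} \<and> (\<forall>x\<in>J. \<forall>y\<in>J. p x y \<in> J) \<and>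
     (\<forall>x\<in>J. \<forall>y. m x y \<in> J \<and> m y x \<in> J)"

definition lattice_ideal :: "('a \<Rightarrow> 'a \<Rightarrow> 'a) \<Rightarrow> 'a set \<Rightarrow> bool" where
  "lattice_ideal p J \<longleftrightarrow> J \<noteq> {} \<and> (\<forall>x\<in>J. \<forall>y\<in>J. p x y \<in> J) \<and>
     (\<forall>x\<in>J. \<forall>y. inc_le p y x \<longrightarrow> y \<in> J)"

definition r_ideal_gen :: "('a \<Rightarrow> 'a \<Rightarrow> 'a) \<Rightarrow> ('a \<Rightarrow> 'a \<Rightarrow> 'a) \<Rightarrow> 'a \<Rightarrow> 'a set" where
  "r_ideal_gen p m x = \<Inter>{J. r_ideal p m J \<and> x \<in> J}"

definition normal_incline :: "('a \<Rightarrow> 'a \<Rightarrow> 'a) \<Rightarrow> ('a \<Rightarrow> 'a \<Rightarrow> 'a) \<Rightarrow> bool" where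
  "normal_incline p m \<longleftrightarrow> commutative_incline p m \<and>
     (\<exists>z. \<forall>x. p z x = x) \<and> (\<exists>u. \<forall>x. m u x = x \<and> m x u = x) \<and>
     (\<forall>x. lattice_ideal p (r_ideal_gen p m x)) \<and>
     (\<forall>x. \<exists>!c. m c c = x) \<and>
     (\<forall>x y. inc_le p (m x y) (p (m x x) (m y y)))"

primrec isum :: "('a \<Rightarrow> 'a \<Rightarrow> 'a) \<Rightarrow> (nat \<Rightarrow> 'a) \<Rightarrow> nat \<Rightarrow> 'a" where
  "isum p f 0 = f 0"
| "isum p f (Suc n) = p (isum p f n) (f (Suc n))"

text \<open>A (3x3, indices 0..2) is completely positive: A = B B^T for a 3 x k matrix B
  (columns 0..n, k = n+1) all of whose entries are squares c \<otimes> c.\<close>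
definition completely_positive ::
  "('a \<Rightarrow> 'a \<Rightarrow> 'a) \<Rightarrow> ('a \<Rightarrow> 'a \<Rightarrow> 'a) \<Rightarrow> (nat \<Rightarrow> nat \<Rightarrow> 'a) \<Rightarrow> bool" where
  "completely_positive p m A \<longleftrightarrow>
     (\<exists>(B::nat \<Rightarrow> nat \<Rightarrow> 'a) n.
        (\<forall>i<3. \<forall>l\<le>n. \<exists>c. B i l = m c c) \<and>
        (\<forall>i<3. \<forall>j<3. A i j = isum p (\<lambda>l. m (B i l) (B j l)) n))"

end

theory Submission
  imports Defs
begin

lemma isum_attain:
  assumes tot: "\<forall>x y. p x y = x \<or> p x y = y"
  shows "\<exists>k\<le>n. isum p f n = f k"
proof (induction n)
  case 0 then show ?case by auto
next
  case (Suc n)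
  then obtain k where "k \<le> n" "isum p f n = f k" by auto
  then show ?case using tot[rule_format, of "isum p f n" "f (Suc n)"]
    by (metis isum.simps(2) le_SucI order_refl)
qed

lemma isum_ge:
  assumes A: "\<forall>x y z. p (p x y) z = p x (p y z)" and C: "\<forall>x y. p x y = p y x"
    and I: "\<forall>x. p x x = x"
  shows "l \<le> n \<Longrightarrow> inc_le p (f l) (isum p f n)"
proof (induction n)
  case 0 then show ?case using I by (simp add: inc_le_def)
next
  case (Suc n)
  show ?case
  proof (cases "l = Suc n")
    case True
    then show ?thesis using A C I unfolding inc_le_def by (metis isum.simps(2))
  next
    case False
    then have "p (f l) (isum p f n) = isum p f n" using Suc by (simp add: inc_le_def)
    then show ?thesis using A C I unfolding inc_le_def by (metis isum.simps(2))
  qed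
qed

lemma key:
  assumes assoc: "\<forall>x y z. m (m x y) z = m x (m y z)" and comm: "\<forall>x y. m x y = m y x"
    and mono: "\<forall>x y z. inc_le p y z \<longrightarrow> inc_le p (m x y) (m x z)"
    and trans: "\<forall>x y z. inc_le p x y \<longrightarrow> inc_le p y z \<longrightarrow> inc_le p x z"
    and tot: "\<forall>x y. inc_le p x y \<or> inc_le p y x"
    and aij: "aij = m bi bj" and aii: "inc_le p (m bi bi) aii" and ajj: "inc_le p (m bj bj) ajj"
  shows "inc_le p (m aij aih) (m aii ajh) \<or> inc_le p (m aij ajh) (m ajj aih)"
proof (cases "inc_le p (m bj aih) (m bi ajh)")
  case True
  have e1: "m aij aih = m bi (m bj aih)" using aij assoc by simp
  have s1: "inc_le p (m bi (m bj aih)) (m bi (m bi ajh))" using mono True by blast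
  have e2: "m bi (m bi ajh) = m (m bi bi) ajh" using assoc by simp
  have s2: "inc_le p (m (m bi bi) ajh) (m aii ajh)"
    using mono aii comm by metis
  show ?thesis using e1 s1 e2 s2 trans by metis
next
  case False
  then have F: "inc_le p (m bi ajh) (m bj aih)" using tot by blast
  have e1: "m aij ajh = m bj (m bi ajh)" using aij assoc comm by metis
  have s1: "inc_le p (m bj (m bi ajh)) (m bj (m bj aih))" using mono F by blast
  have e2: "m bj (m bj aih) = m (m bj bj) aih" using assoc by simp
  have s2: "inc_le p (m (m bj bj) aih) (m ajj aih)"
    using mono ajj comm by metis
  show ?thesis using e1 s1 e2 s2 trans by metis
qed

theorem mainTheorem9:
  fixes p m :: "'a \<Rightarrow> 'a \<Rightarrow> 'a" and A :: "nat \<Rightarrow> nat \<Rightarrow> 'a"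
  assumes "normal_incline p m" and "totally_ordered p"
    and "completely_positive p m A"
  shows "let I1 = inc_le p (m (A 0 1) (A 0 2)) (m (A 0 0) (A 1 2));
             I2 = inc_le p (m (A 0 1) (A 1 2)) (m (A 1 1) (A 0 2));
             I3 = inc_le p (m (A 0 2) (A 1 2)) (m (A 2 2) (A 0 1))
         in (I1 \<and> I2) \<or> (I1 \<and> I3) \<or> (I2 \<and> I3)"
proof -
  have inc: "incline p m" and comm: "\<forall>x y. m x y = m y x"
    using assms(1) unfolding normal_incline_def commutative_incline_def by auto
  have pA: "\<forall>x y z. p (p x y) z = p x (p y z)" and pC: "\<forall>x y. p x y = p y x"
    and pI: "\<forall>x. p x x = x" and assoc: "\<forall>x y z. m (m x y) z = m x (m y z)"
    and dist: "\<forall>x y z. m x (p y z) = p (m x y) (m x z)"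
    using inc unfolding incline_def by auto
  have tot: "\<forall>x y. inc_le p x y \<or> inc_le p y x"
    using assms(2) unfolding totally_ordered_def by auto
  have tot2: "\<forall>x y. p x y = x \<or> p x y = y"
    using tot pC unfolding inc_le_def by metis
  have mono: "\<forall>x y z. inc_le p y z \<longrightarrow> inc_le p (m x y) (m x z)"
    using dist unfolding inc_le_def by metis
  have trans: "\<forall>x y z. inc_le p x y \<longrightarrow> inc_le p y z \<longrightarrow> inc_le p x z"
    using pA unfolding inc_le_def by metis
  obtain B n where Bdef: "\<forall>i<3. \<forall>j<3. A i j = isum p (\<lambda>l. m (B i l) (B j l)) n"
    using assms(3) unfolding completely_positive_def by blast
  have sym: "A j i = A i j" if "i < 3" "j < 3" for i j
  proof -
    have "(\<lambda>l. m (B i l) (B j l)) = (\<lambda>l. m (B j l) (B i l))" using comm by auto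
    then show ?thesis using Bdef that by simp
  qed
  have pair: "inc_le p (m (A i j) (A i h)) (m (A i i) (A j h)) \<or>
              inc_le p (m (A i j) (A j h)) (m (A j j) (A i h))"
    if "i < 3" "j < 3" for i j h
  proof -
    have Aij: "A i j = isum p (\<lambda>l. m (B i l) (B j l)) n" using Bdef that by blast
    obtain k where k0: "k \<le> n" "isum p (\<lambda>l. m (B i l) (B j l)) n = m (B i k) (B j k)"
      using isum_attain[OF tot2, of n "\<lambda>l. m (B i l) (B j l)"] by auto
    have k: "k \<le> n" "A i j = m (B i k) (B j k)" using k0 Aij by auto
    have "inc_le p (m (B i k) (B i k)) (A i i)"
      using isum_ge[OF pA pC pI k(1), of "\<lambda>l. m (B i l) (B i l)"] Bdef that by simp
    moreover have "inc_le p (m (B j k) (B j k)) (A j j)"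
      using isum_ge[OF pA pC pI k(1), of "\<lambda>l. m (B j l) (B j l)"] Bdef that by simp
    ultimately show ?thesis using key[OF assoc comm mono trans tot k(2)] by blast
  qed
  have P01: "inc_le p (m (A 0 1) (A 0 2)) (m (A 0 0) (A 1 2)) \<or>
             inc_le p (m (A 0 1) (A 1 2)) (m (A 1 1) (A 0 2))"
    using pair[of 0 1 2] by simp
  have P02: "inc_le p (m (A 0 1) (A 0 2)) (m (A 0 0) (A 1 2)) \<or>
             inc_le p (m (A 0 2) (A 1 2)) (m (A 2 2) (A 0 1))"
    using pair[of 0 2 1] sym[of 1 2] comm by simp
  have P12: "inc_le p (m (A 0 1) (A 1 2)) (m (A 1 1) (A 0 2)) \<or>
             inc_le p (m (A 0 2) (A 1 2)) (m (A 2 2) (A 0 1))"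
    using pair[of 1 2 0] sym[of 0 1] sym[of 0 2] comm by simp
  show ?thesis using P01 P02 P12 unfolding Let_def by blast
qed

end
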